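(* Fix $\epsilon,\phi\in\mathbb R$ with $|\phi|>1$ and $\epsilon\ne\phi$. For each $n$, let $(\nu_n,\mathbf y_n)$ be an eigenpair of $T_{n,\epsilon,\phi}$ with $\|\mathbf y_n\|_2=1$, and suppose $\nu_n\to\phi+\phi^{-1}$ as $n\to\infty$. Then: 1. Eventually, $\nu_n$ is an outlier of $T_{n,\epsilon,\phi}$, and there is a constant $c>0$ independent of $n$ such that eventually every eigenvalue $\lambda_n\ne\nu_n$ of $T_{n,\epsilon,\phi}$ satisfies $|\lambda_n-(\phi+\phi^{-1})|\ge c$. 2. $\|\mathbf y_n-P_{\mathbf w_n}\mathbf y_n\|_2\to0$ as $n\to\infty$, where $\mathbf w_n=[\phi^{-n+1},\ldots,\phi^{-1},1]^\top$.
   Context: For $n\ge2$ and real parameters $\epsilon,\phi$, $T_{n,\epsilon,\phi}$ is the real symmetric tridiagonal $n\times n$ matrix with diagonal entries $(\epsilon,0,\ldots,0,\phi)$ and all sub- and super-diagonal entries equal to $1$. An outlier is an eigenvalue not in $[-2,2]$. For $\mathbf u\in\mathbb R^n\setminus\{0\}$, $P_{\mathbf u}$ denotes the orthogonal projector onto $\mathrm{span}\{\mathbf u\}$: $P_{\mathbf u}\mathbf x=\frac{\mathbf x^\top\mathbf u}{\mathbf u^\top\mathbf u}\mathbf u$. *)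

theory Defs
  imports "Jordan_Normal_Form.Char_Poly"
begin

definition tridiag_T :: "nat \<Rightarrow> real \<Rightarrow> real \<Rightarrow> real mat" where
  "tridiag_T n eps phi = mat n n (\<lambda>(i,j).
     if i = j then (if i = 0 then eps else if i = n - 1 then phi else 0)
     else if i = j + 1 \<or> j = i + 1 then 1 else 0)"

definition norm2 :: "real vec \<Rightarrow> real" where
  "norm2 v = sqrt (v \<bullet> v)"

definition proj_onto :: "real vec \<Rightarrow> real vec \<Rightarrow> real vec" where
  "proj_onto u x = ((x \<bullet> u) / (u \<bullet> u)) \<cdot>\<^sub>v u"

definition outlier :: "real mat \<Rightarrow> real \<Rightarrow> bool" where
  "outlier A lam \<longleftrightarrow> eigenvalue A lam \<and> lam \<notin> {-2..2}"

definition w_vec :: "nat \<Rightarrow> real \<Rightarrow> real vec" where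
  "w_vec n phi = vec n (\<lambda>i. 1 / phi ^ (n - 1 - i))"

end

theory Submission
  imports Defs
begin


lemma T_carrier: "tridiag_T n eps phi \<in> carrier_mat n n"
  by (simp add: tridiag_T_def)

lemma T_transpose: "transpose_mat (tridiag_T n eps phi) = tridiag_T n eps phi"
  by (rule eq_matI) (auto simp: tridiag_T_def)

lemma T_row0:
  assumes "n \<ge> 2" "u \<in> carrier_vec n"
  shows "(tridiag_T n eps phi *\<^sub>v u) $ 0 = eps * u$0 + u$1"
proof -
  have "(tridiag_T n eps phi *\<^sub>v u) $ 0 = (\<Sum>j\<in>{0..<n}. tridiag_T n eps phi $$ (0,j) * u $ j)"
    using assms by (simp add: tridiag_T_def scalar_prod_def)
  also have "\<dots> = (\<Sum>j\<in>{0..<n}. (if j = 0 then eps * u$0 else 0) + (if j = 1 then u$1 else 0))"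
    using assms by (intro sum.cong) (auto simp: tridiag_T_def)
  also have "\<dots> = eps * u$0 + u$1"
    using assms by (simp add: sum.distrib)
  finally show ?thesis .
qed

lemma T_rowi:
  assumes "1 \<le> i" "i + 2 \<le> n" "u \<in> carrier_vec n"
  shows "(tridiag_T n eps phi *\<^sub>v u) $ i = u$(i-1) + u$(i+1)"
proof -
  have "(tridiag_T n eps phi *\<^sub>v u) $ i = (\<Sum>j\<in>{0..<n}. tridiag_T n eps phi $$ (i,j) * u $ j)"
    using assms by (simp add: tridiag_T_def scalar_prod_def)
  also have "\<dots> = (\<Sum>j\<in>{0..<n}. (if j = i - 1 then u$(i-1) else 0) + (if j = i + 1 then u$(i+1) else 0))"
    using assms by (intro sum.cong) (auto simp: tridiag_T_def)
  also have "\<dots> = u$(i-1) + u$(i+1)"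
    using assms by (simp add: sum.distrib)
  finally show ?thesis .
qed

lemma eig_rows:
  assumes "n \<ge> 2" "eigenvector (tridiag_T n eps phi) u lam"
  shows "u \<in> carrier_vec n" "eps * u$0 + u$1 = lam * u$0"
    "\<And>i. 1 \<le> i \<Longrightarrow> i + 2 \<le> n \<Longrightarrow> u$(i-1) + u$(i+1) = lam * u$i"
    "u \<bullet> u > 0"
proof -
  have c: "u \<in> carrier_vec n" and nz: "u \<noteq> 0\<^sub>v n" and e: "tridiag_T n eps phi *\<^sub>v u = lam \<cdot>\<^sub>v u"
    using assms unfolding eigenvector_def by (auto simp: tridiag_T_def)
  show "u \<in> carrier_vec n" by fact
  have "(tridiag_T n eps phi *\<^sub>v u) $ 0 = lam * u $ 0" using e c assms(1) by simp
  then show "eps * u$0 + u$1 = lam * u$0" using T_row0[OF assms(1) c] by simp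
  show "u$(i-1) + u$(i+1) = lam * u$i" if "1 \<le> i" "i + 2 \<le> n" for i
  proof -
    have "(tridiag_T n eps phi *\<^sub>v u) $ i = lam * u $ i" using e c that by simp
    then show ?thesis using T_rowi[OF that c] by simp
  qed
  obtain k where k: "k < n" "u $ k \<noteq> 0" using nz c by (metis eq_vecI carrier_vecD index_zero_vec(1,2))
  have "u \<bullet> u = (\<Sum>j\<in>{0..<n}. (u$j)^2)" using c by (simp add: scalar_prod_def power2_eq_square)
  also have "\<dots> > 0"
    by (rule sum_pos2[of _ k]) (use k in auto)
  finally show "u \<bullet> u > 0" .
qed



lemma tele:
  fixes x y :: "nat \<Rightarrow> real"
  assumes "0 \<le> q" "\<And>i. i < m \<Longrightarrow> x (Suc i) \<le> q * x i + y i"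
  shows "(1-q) * (\<Sum>i\<le>m. x i) + q * x m \<le> x 0 + (\<Sum>i<m. y i)"
  using assms(2)
proof (induction m)
  case 0 then show ?case by (simp add: algebra_simps)
next
  case (Suc m)
  have ih: "(1-q) * (\<Sum>i\<le>m. x i) + q * x m \<le> x 0 + (\<Sum>i<m. y i)" using Suc by auto
  have st: "x (Suc m) \<le> q * x m + y m" using Suc by auto
  have "(1-q) * (\<Sum>i\<le>Suc m. x i) + q * x (Suc m) = (1-q) * (\<Sum>i\<le>m. x i) + x (Suc m)"
    by (simp add: algebra_simps)
  also have "\<dots> \<le> x 0 + (\<Sum>i<Suc m. y i)" using ih st by simp
  finally show ?case .
qed

lemma sq_ineq:
  fixes a b phi :: real
  assumes "\<bar>phi\<bar> > 1"
  shows "(a/phi + b)^2 \<le> a^2/\<bar>phi\<bar> + (\<bar>phi\<bar>/(\<bar>phi\<bar>-1)) * b^2"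
proof -
  define p where "p = \<bar>phi\<bar>"
  have p1: "p > 1" using assms p_def by simp
  have pp: "phi^2 = p^2" unfolding p_def by simp
  have phi0: "phi \<noteq> 0" using assms by auto
  have key: "0 \<le> (a*(p-1) - b*p^2/phi)^2" by simp
  have "(a/phi + b)^2 = a^2/phi^2 + 2*a*b/phi + b^2"
    by (simp add: power2_sum power_divide)
  hence "(a/phi + b)^2 = a^2/p^2 + 2*a*b/phi + b^2" using pp by simp
  moreover have "a^2/p + (p/(p-1)) * b^2 - (a^2/p^2 + 2*a*b/phi + b^2)
       = (a*(p-1) - b*p^2/phi)^2 / ((p-1)*p^2)"
  proof -
    have "phi = p \<or> phi = -p" unfolding p_def by auto
    then show ?thesis using p1 by (auto simp: power2_eq_square field_simps)
  qed
  moreover have "(a*(p-1) - b*p^2/phi)^2 / ((p-1)*p^2) \<ge> 0" using p1 by simp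
  ultimately show ?thesis unfolding p_def[symmetric] by linarith
qed


lemma core:
  fixes eps phi :: real
  assumes phi: "\<bar>phi\<bar> > 1" and ne: "eps \<noteq> phi"
  shows "\<exists>C>0. \<forall>n lam v. n \<ge> 2 \<longrightarrow> eps * v 0 + v 1 = lam * v 0
     \<longrightarrow> (\<forall>i. 1 \<le> i \<and> i+2 \<le> n \<longrightarrow> v (i-1) + v (i+1) = lam * v i)
     \<longrightarrow> (\<Sum>i<n. (v i)^2) = 1
     \<longrightarrow> \<bar>lam - (phi + 1/phi)\<bar> \<le> \<bar>phi - eps\<bar>/2
     \<longrightarrow> (\<Sum>i<n. (v i - v (n-1) * (1/phi^(n-1-i)))^2) \<le> C * ((1/\<bar>phi\<bar>)^(n-2) + \<bar>lam - (phi+1/phi)\<bar>)^2"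
proof -
  define p where "p = \<bar>phi\<bar>"
  define \<kappa> where "\<kappa> = \<bar>phi - eps\<bar>/2"
  define A where "A = (2 + 1/(p-1))/\<kappa>"
  define B where "B = (1/p + \<bar>eps\<bar> + \<kappa>) * A"
  define K where "K = p/(p-1)"
  define C where "C = (B^2 + K) * (p/(p-1)) / (p-1)^2"
  have p1: "p > 1" using phi p_def by simp
  have k0: "\<kappa> > 0" using ne \<kappa>_def by simp
  have phi0: "phi \<noteq> 0" using phi by auto
  have K0: "K > 0" using p1 K_def by simp
  have C0: "C > 0" using p1 K0 unfolding C_def by (intro divide_pos_pos mult_pos_pos) (auto intro: add_nonneg_pos)
  show ?thesis
  proof (intro exI[of _ C] conjI allI impI C0)
    fix n lam and v :: "nat \<Rightarrow> real"
    assume n2: "n \<ge> 2" and r0: "eps * v 0 + v 1 = lam * v 0"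
      and ri: "\<forall>i. 1 \<le> i \<and> i+2 \<le> n \<longrightarrow> v (i-1) + v (i+1) = lam * v i"
      and nv: "(\<Sum>i<n. (v i)^2) = 1"
      and dl: "\<bar>lam - (phi + 1/phi)\<bar> \<le> \<bar>phi - eps\<bar>/2"
    define \<delta> where "\<delta> = lam - (phi + 1/phi)"
    define \<rho> where "\<rho> = (1/p)^(n-2)"
    define t where "t = \<rho> + \<bar>\<delta>\<bar>"
    have dk: "\<bar>\<delta>\<bar> \<le> \<kappa>" using dl \<delta>_def \<kappa>_def by simp
    have rho0: "\<rho> \<ge> 0" using p1 \<rho>_def by simp
    have vb: "\<bar>v i\<bar> \<le> 1" if "i < n" for i
    proof -
      have "(v i)^2 \<le> (\<Sum>i<n. (v i)^2)"
        by (rule member_le_sum) (use that in auto)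
      then show ?thesis using nv by (simp add: abs_square_le_1)
    qed
    have dv: "\<bar>\<delta> * v i\<bar> \<le> \<bar>\<delta>\<bar>" if "i < n" for i
      using vb[OF that] by (simp add: abs_mult mult_left_le)
    define g where "g i = v i - v (i-1)/phi" for i
    have grec: "g i = (g (i+1) - \<delta> * v i)/phi" if "1 \<le> i" "i+2 \<le> n" for i
    proof -
      have e: "v (Suc i) = lam * v i - v (i-1)" using ri that by (auto simp: algebra_simps)
      have "g (i+1) = phi * g i + \<delta> * v i" unfolding g_def \<delta>_def using phi0 by (simp add: e field_simps)
      then show ?thesis using phi0 by (simp add: field_simps)
    qed
    have gb: "k + 2 \<le> n \<longrightarrow> \<bar>g (n-1-k)\<bar> \<le> 2*(1/p)^k + \<bar>\<delta>\<bar>/(p-1)" for k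
    proof (induction k)
      case 0
      have "\<bar>g (n-1)\<bar> \<le> \<bar>v (n-1)\<bar> + \<bar>v (n-1-1)\<bar>/p"
        unfolding g_def p_def by (simp add: abs_triangle_ineq4[THEN order_trans] abs_divide)
      also have "\<dots> \<le> 1 + 1/p" using vb[of "n-1"] vb[of "n-1-1"] n2 p1
        by (intro add_mono divide_right_mono) auto
      also have "\<dots> \<le> 2*(1/p)^0 + \<bar>\<delta>\<bar>/(p-1)"
      proof -
        have "1/p \<le> 1" "0 \<le> \<bar>\<delta>\<bar>/(p-1)" using p1 by auto
        then show ?thesis by simp
      qed
      finally show ?case by simp
    next
      case (Suc k)
      show ?case
      proof
        assume a: "Suc k + 2 \<le> n"
        define i where "i = n - 1 - Suc k"
        have i1: "1 \<le> i" "i + 2 \<le> n" "i < n" using a i_def by auto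
        have ii: "i + 1 = n - 1 - k" using a i_def by auto
        have ih: "\<bar>g (i+1)\<bar> \<le> 2*(1/p)^k + \<bar>\<delta>\<bar>/(p-1)" using Suc a ii by auto
        have "\<bar>g i\<bar> = \<bar>g (i+1) - \<delta> * v i\<bar> / p" using grec[OF i1(1,2)] p_def by (simp add: abs_divide)
        also have "\<dots> \<le> (\<bar>g (i+1)\<bar> + \<bar>\<delta>\<bar>)/p"
          using dv[OF i1(3)] p1 by (intro divide_right_mono) (auto intro: abs_triangle_ineq4[THEN order_trans])
        also have "\<dots> \<le> (2*(1/p)^k + \<bar>\<delta>\<bar>/(p-1) + \<bar>\<delta>\<bar>)/p"
          using ih p1 by (intro divide_right_mono) auto
        also have "\<dots> = 2*(1/p)^Suc k + \<bar>\<delta>\<bar>/(p-1)"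
          using p1 by (simp add: field_simps)
        finally show "\<bar>g (n-1-Suc k)\<bar> \<le> 2*(1/p)^Suc k + \<bar>\<delta>\<bar>/(p-1)" using i_def by simp
      qed
    qed
    have g1: "\<bar>g 1\<bar> \<le> 2*\<rho> + \<bar>\<delta>\<bar>/(p-1)"
      using gb[of "n-2"] n2 unfolding \<rho>_def by (simp add: numeral_2_eq_2 Suc_diff_Suc)
    have v1: "v 1 = (lam - eps) * v 0" using r0 by (simp add: algebra_simps)
    have g1e: "g 1 = (phi - eps + \<delta>) * v 0" unfolding g_def \<delta>_def using v1 by (simp add: algebra_simps)
    have fk: "\<kappa> \<le> \<bar>phi - eps + \<delta>\<bar>"
    proof -
      have "\<bar>(phi - eps + \<delta>) + (-\<delta>)\<bar> \<le> \<bar>phi - eps + \<delta>\<bar> + \<bar>-\<delta>\<bar>" by (rule abs_triangle_ineq)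
      then show ?thesis using dk \<kappa>_def by simp
    qed
    have "\<kappa> * \<bar>v 0\<bar> \<le> \<bar>g 1\<bar>" unfolding g1e abs_mult by (rule mult_right_mono[OF fk]) simp
    also have "\<dots> \<le> 2*\<rho> + \<bar>\<delta>\<bar>/(p-1)" by (rule g1)
    also have "\<dots> \<le> (2 + 1/(p-1)) * t"
    proof -
      define q where "q = 1/(p-1)"
      have q0: "0 \<le> q" using p1 q_def by simp
      have "\<bar>\<delta>\<bar>/(p-1) = q * \<bar>\<delta>\<bar>" unfolding q_def by simp
      moreover have "0 \<le> q * \<rho>" using q0 rho0 by simp
      moreover have "(2 + q) * t = 2*\<rho> + 2*\<bar>\<delta>\<bar> + q*\<rho> + q*\<bar>\<delta>\<bar>" unfolding t_def by (simp add: algebra_simps)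
      ultimately show ?thesis unfolding q_def[symmetric] using abs_ge_zero[of \<delta>] by linarith
    qed
    finally have "\<kappa> * \<bar>v 0\<bar> \<le> (2 + 1/(p-1)) * t" .
    hence v0: "\<bar>v 0\<bar> \<le> A * t"
    proof -
      assume h: "\<kappa> * \<bar>v 0\<bar> \<le> (2 + 1/(p-1)) * t"
      have "\<bar>v 0\<bar> = (\<kappa> * \<bar>v 0\<bar>) / \<kappa>" using k0 by simp
      also have "\<dots> \<le> ((2 + 1/(p-1)) * t) / \<kappa>" using h k0 by (rule divide_right_mono[OF _ less_imp_le])
      also have "\<dots> = A * t" unfolding A_def by simp
      finally show ?thesis .
    qed
    define d where "d i = v i - phi * v (i-1)" for i
    have drec: "d (i+1) = d i / phi + \<delta> * v i" if "1 \<le> i" "i+2 \<le> n" for i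
    proof -
      have e: "v (Suc i) = lam * v i - v (i-1)" using ri that by (auto simp: algebra_simps)
      show ?thesis unfolding d_def \<delta>_def using phi0 by (simp add: e field_simps)
    qed
    have d1e: "d 1 = (1/phi - eps + \<delta>) * v 0" unfolding d_def \<delta>_def using v1 by (simp add: algebra_simps)
    have "\<bar>1/phi - eps + \<delta>\<bar> \<le> 1/p + \<bar>eps\<bar> + \<kappa>"
    proof -
      have "\<bar>1/phi - eps + \<delta>\<bar> \<le> \<bar>1/phi - eps\<bar> + \<bar>\<delta>\<bar>" by (rule abs_triangle_ineq)
      moreover have "\<bar>1/phi - eps\<bar> \<le> \<bar>1/phi\<bar> + \<bar>eps\<bar>" by (rule abs_triangle_ineq4)
      moreover have "\<bar>1/phi\<bar> = 1/p" unfolding p_def by (simp add: abs_divide)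
      ultimately show ?thesis using dk by linarith
    qed
    hence "\<bar>d 1\<bar> \<le> (1/p + \<bar>eps\<bar> + \<kappa>) * (A * t)" unfolding d1e abs_mult
      using v0 by (intro mult_mono) auto
    hence d1b: "\<bar>d 1\<bar> \<le> B * t" unfolding B_def by (simp add: mult.assoc)
    have Bt0: "0 \<le> B * t" using d1b by linarith
    have d1sq: "(d 1)^2 \<le> (B*t)^2" using d1b by (simp add: abs_le_square_iff[symmetric] Bt0 abs_of_nonneg power2_abs)
    define Sd where "Sd = (\<Sum>i\<le>n-2. (d (i+1))^2)"
    have tl1: "(1 - 1/p) * Sd + (1/p) * (d (n-2+1))^2 \<le> (d (0+1))^2 + (\<Sum>i<n-2. K * \<delta>^2 * (v (i+1))^2)"
      unfolding Sd_def
    proof (rule tele[where x="\<lambda>i. (d (i+1))^2"])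
      show "0 \<le> 1/p" using p1 by simp
      fix i assume "i < n-2"
      hence i: "1 \<le> i+1" "i+1+2 \<le> n" by auto
      have "(d (Suc i + 1))^2 = (d (i+1) / phi + \<delta> * v (i+1))^2" using drec[OF i] by simp
      also have "\<dots> \<le> (d (i+1))^2 / p + K * (\<delta> * v (i+1))^2"
        unfolding p_def K_def by (rule sq_ineq[OF phi])
      finally show "(d (Suc i + 1))^2 \<le> 1/p * (d (i+1))^2 + K * \<delta>^2 * (v (i+1))^2"
        by (simp add: power_mult_distrib)
    qed
    have "(\<Sum>i<n-2. (v (i+1))^2) = (\<Sum>j\<in>Suc ` {..<n-2}. (v j)^2)"
      by (simp add: sum.reindex)
    also have "\<dots> \<le> (\<Sum>j<n. (v j)^2)" by (rule sum_mono2) auto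
    finally have sv: "(\<Sum>i<n-2. (v (i+1))^2) \<le> 1" using nv by simp
    have "(\<Sum>i<n-2. K * \<delta>^2 * (v (i+1))^2) = K * \<delta>^2 * (\<Sum>i<n-2. (v (i+1))^2)"
      by (simp add: sum_distrib_left)
    also have "\<dots> \<le> K * \<delta>^2" using sv K0 by (simp add: mult_left_le)
    also have "\<dots> \<le> K * t^2" using K0 rho0 unfolding t_def
      by (intro mult_left_mono) (auto simp: abs_le_square_iff[symmetric] power2_abs)
    finally have sk: "(\<Sum>i<n-2. K * \<delta>^2 * (v (i+1))^2) \<le> K * t^2" .
    have "(1 - 1/p) * Sd \<le> (B*t)^2 + K * t^2"
    proof -
      have "0 \<le> (1/p) * (d (n-2+1))^2" using p1 by simp
      then show ?thesis using tl1 d1sq sk by simp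
    qed
    hence Sdb: "Sd \<le> (B^2 + K) * t^2 * (p/(p-1))" using p1
      by (simp add: field_simps power_mult_distrib)
    define e where "e i = v i - v (n-1) * (1/phi^(n-1-i))" for i
    have erec: "e (i-1) = e i / phi + (- d i / phi)" if "1 \<le> i" "i \<le> n-1" for i
    proof -
      have "phi^(n-1-(i-1)) = phi * phi^(n-1-i)" using that
        proof -
        have h: "n-1-(i-1) = Suc (n-1-i)" using that by simp
        show ?thesis unfolding h by (rule power_Suc)
      qed
      then show ?thesis using phi0 unfolding e_def d_def by (simp add: field_simps)
    qed
    have tl2: "(1 - 1/p) * (\<Sum>j\<le>n-1. (e (n-1-j))^2) + (1/p) * (e (n-1-(n-1)))^2
        \<le> (e (n-1-0))^2 + (\<Sum>j<n-1. (d (n-1-j))^2 / (p*(p-1)))"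
    proof (rule tele[where x="\<lambda>j. (e (n-1-j))^2"])
      show "0 \<le> 1/p" using p1 by simp
      fix j assume j: "j < n-1"
      hence i: "1 \<le> n-1-j" "n-1-j \<le> n-1" by auto
      have jj: "n-1-Suc j = n-1-j-1" by simp
      have "(e (n-1-Suc j))^2 = (e (n-1-j) / phi + (- d (n-1-j) / phi))^2"
        unfolding jj erec[OF i] ..
      also have "\<dots> \<le> (e (n-1-j))^2 / p + K * (- d (n-1-j) / phi)^2"
        unfolding p_def K_def by (rule sq_ineq[OF phi])
      also have "K * (- d (n-1-j) / phi)^2 = (d (n-1-j))^2 / (p*(p-1))"
      proof -
        have "(- d (n-1-j) / phi)^2 = (d (n-1-j))^2 / p^2" unfolding p_def by (simp add: power_divide power2_abs)
        moreover have "K * ((d (n-1-j))^2 / p^2) = (d (n-1-j))^2 / (p*(p-1))"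
          unfolding K_def using p1 by (simp add: field_simps power2_eq_square)
        ultimately show ?thesis by simp
      qed
      finally show "(e (n-1-Suc j))^2 \<le> 1/p * (e (n-1-j))^2 + (d (n-1-j))^2 / (p*(p-1))" by simp
    qed
    have e0: "e (n-1) = 0" unfolding e_def by simp
    have E1: "(\<Sum>j\<le>n-1. (e (n-1-j))^2) = (\<Sum>i<n. (e i)^2)"
      using n2 by (intro sum.reindex_bij_witness[where i="\<lambda>i. n-1-i" and j="\<lambda>i. n-1-i"]) auto
    have E2: "(\<Sum>j<n-1. (d (n-1-j))^2 / (p*(p-1))) = Sd / (p*(p-1))"
      unfolding Sd_def sum_divide_distrib
      using n2 by (intro sum.reindex_bij_witness[where i="\<lambda>i. n-2-i" and j="\<lambda>i. n-2-i"]) (auto simp: Suc_diff_Suc)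
    have "(1 - 1/p) * (\<Sum>i<n. (e i)^2) \<le> Sd / (p*(p-1))"
    proof -
      have h0: "0 \<le> (e 0)^2/p" using p1 by simp
      have "(1 - 1/p) * (\<Sum>i<n. (e i)^2) + (e 0)^2/p \<le> Sd / (p*(p-1))" using tl2 E1 E2 e0 p1 by simp
      then show ?thesis using h0 by linarith
    qed
    hence "(\<Sum>i<n. (e i)^2) \<le> Sd / (p-1)^2"
    proof -
      assume h: "(1 - 1/p) * (\<Sum>i<n. (e i)^2) \<le> Sd / (p*(p-1))"
      define E where "E = (\<Sum>i<n. (e i)^2)"
      have "E = ((1 - 1/p) * E) * (p/(p-1))" using p1 by (simp add: field_simps)
      also have "\<dots> \<le> (Sd / (p*(p-1))) * (p/(p-1))"
        using h p1 unfolding E_def by (intro mult_right_mono) auto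
      also have "\<dots> = (p*Sd) / (p*((p-1)*(p-1)))" by (simp add: ac_simps)
      also have "\<dots> = Sd / (p-1)^2" using p1 by (simp add: power2_eq_square)
      finally show ?thesis unfolding E_def .
    qed
    also have "\<dots> \<le> (B^2 + K) * t^2 * (p/(p-1)) / (p-1)^2"
      using Sdb p1 by (intro divide_right_mono) auto
    also have "\<dots> = C * t^2" unfolding C_def by simp
    finally show "(\<Sum>i<n. (v i - v (n-1) * (1/phi^(n-1-i)))^2) \<le> C * ((1/\<bar>phi\<bar>)^(n-2) + \<bar>lam - (phi+1/phi)\<bar>)^2"
      unfolding e_def t_def \<rho>_def \<delta>_def p_def .
  qed
qed



lemma normalized:
  assumes n2: "n \<ge> 2" and ev: "eigenvector (tridiag_T n eps phi) u lam"
  defines "v \<equiv> \<lambda>i. u$i / sqrt (u \<bullet> u)"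
  shows "eps * v 0 + v 1 = lam * v 0"
    "\<forall>i. 1 \<le> i \<and> i+2 \<le> n \<longrightarrow> v (i-1) + v (i+1) = lam * v i"
    "(\<Sum>i<n. (v i)^2) = 1"
proof -
  note r = eig_rows[OF n2 ev]
  define s where "s = sqrt (u \<bullet> u)"
  have s0: "s > 0" using r(4) s_def by simp
  have vd: "v i = u$i / s" for i unfolding v_def s_def by simp
  show "eps * v 0 + v 1 = lam * v 0" unfolding vd using r(2) s0
    by (simp add: field_simps)
  show "\<forall>i. 1 \<le> i \<and> i+2 \<le> n \<longrightarrow> v (i-1) + v (i+1) = lam * v i"
  proof (intro allI impI)
    fix i assume "1 \<le> i \<and> i+2 \<le> n"
    then have "u$(i-1) + u$(i+1) = lam * u$i" using r(3) by auto
    then have "(u$(i-1) + u$(i+1)) / s = (lam * u$i) / s" by simp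
    then show "v (i-1) + v (i+1) = lam * v i" unfolding vd by (simp only: add_divide_distrib times_divide_eq_right)
  qed
  have "(\<Sum>i<n. (v i)^2) = (\<Sum>i<n. (u$i)^2) / s^2" unfolding vd
    by (simp add: power_divide sum_divide_distrib)
  also have "(\<Sum>i<n. (u$i)^2) = u \<bullet> u" using r(1)
    by (simp add: scalar_prod_def power2_eq_square atLeast0LessThan)
  also have "s^2 = u \<bullet> u" unfolding s_def using r(4) by simp
  finally show "(\<Sum>i<n. (v i)^2) = 1" using r(4) by simp
qed

lemma orth:
  assumes "n \<ge> 2" "eigenvector (tridiag_T n eps phi) u lam" "eigenvector (tridiag_T n eps phi) y mu" "lam \<noteq> mu"
  shows "(\<Sum>i<n. u$i * y$i) = 0"
proof -
  have u: "u \<in> carrier_vec n" and y: "y \<in> carrier_vec n" using eig_rows assms by blast+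
  have eu: "tridiag_T n eps phi *\<^sub>v u = lam \<cdot>\<^sub>v u" and ey: "tridiag_T n eps phi *\<^sub>v y = mu \<cdot>\<^sub>v y"
    using assms unfolding eigenvector_def by auto
  have "(transpose_mat (tridiag_T n eps phi) *\<^sub>v y) \<bullet> u = y \<bullet> (tridiag_T n eps phi *\<^sub>v u)"
    by (rule transpose_vec_mult_scalar[OF T_carrier u y])
  hence "(mu \<cdot>\<^sub>v y) \<bullet> u = y \<bullet> (lam \<cdot>\<^sub>v u)" unfolding T_transpose eu ey .
  hence "mu * (y \<bullet> u) = lam * (y \<bullet> u)" using u y by simp
  hence "y \<bullet> u = 0" using assms(4) by simp
  then show ?thesis using u y by (simp add: scalar_prod_def atLeast0LessThan mult.commute)
qed

lemma orth_contra:
  fixes v y w :: "nat \<Rightarrow> real"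
  assumes "(\<Sum>i<n. (v i)^2) = 1" "(\<Sum>i<n. (y i)^2) = 1" "(\<Sum>i<n. v i * y i) = 0"
    "(\<Sum>i<n. (v i - a * w i)^2) \<le> F" "(\<Sum>i<n. (y i - b * w i)^2) \<le> F" "F \<le> 1/4"
  shows False
proof -
  have "(\<Sum>i<n. (b * v i - a * y i)^2) = (\<Sum>i<n. b^2 * (v i)^2 - 2*a*b * (v i * y i) + a^2 * (y i)^2)"
    by (intro sum.cong) (auto simp: power2_eq_square algebra_simps)
  also have "\<dots> = b^2 * (\<Sum>i<n. (v i)^2) - 2*a*b * (\<Sum>i<n. v i * y i) + a^2 * (\<Sum>i<n. (y i)^2)"
    by (simp add: sum.distrib sum_subtractf sum_distrib_left)
  also have "\<dots> = a^2 + b^2" using assms(1-3) by simp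
  finally have eq: "(\<Sum>i<n. (b * v i - a * y i)^2) = a^2 + b^2" .
  have "(\<Sum>i<n. (b * v i - a * y i)^2) \<le> (\<Sum>i<n. 2*b^2 * (v i - a * w i)^2 + 2*a^2 * (y i - b * w i)^2)"
  proof (intro sum_mono)
    fix i
    have "b * v i - a * y i = b * (v i - a * w i) - a * (y i - b * w i)" by (simp add: algebra_simps)
    moreover have sq2: "(X - Y)^2 \<le> 2*X^2 + 2*Y^2" for X Y :: real
      using zero_le_power2[of "X+Y"] by (simp add: power2_eq_square algebra_simps)
    moreover have "(b * (v i - a*w i) - a * (y i - b*w i))^2 \<le> 2*(b*(v i - a*w i))^2 + 2*(a*(y i - b*w i))^2"
      by (rule sq2)
    ultimately show "(b * v i - a * y i)^2 \<le> 2*b^2 * (v i - a * w i)^2 + 2*a^2 * (y i - b * w i)^2"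
      by (simp add: power_mult_distrib mult.assoc)
  qed
  also have "\<dots> = 2*b^2 * (\<Sum>i<n. (v i - a * w i)^2) + 2*a^2 * (\<Sum>i<n. (y i - b * w i)^2)"
    by (simp add: sum.distrib sum_distrib_left)
  also have "\<dots> \<le> 2*b^2 * F + 2*a^2 * F"
    using assms(4,5) by (intro add_mono mult_left_mono) auto
  also have "\<dots> \<le> 2*b^2 * (1/4) + 2*a^2 * (1/4)"
    using assms(6) by (intro add_mono mult_left_mono) auto
  finally have "a^2 + b^2 \<le> (a^2 + b^2)/2" unfolding eq by simp
  hence "a^2 + b^2 \<le> 0" by simp
  hence "a^2 \<le> 0" using zero_le_power2[of b] by linarith
  hence a0: "a = 0" by simp
  have "1 \<le> F" using assms(1,4) unfolding a0 by simp
  then show False using assms(6) by simp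
qed

lemma proj_bound:
  assumes "y \<in> carrier_vec n" "w \<in> carrier_vec n" "w \<bullet> w > 0"
  shows "norm2 (y - proj_onto w y) \<le> sqrt (\<Sum>i<n. (y$i - c * w$i)^2)"
proof -
  define a where "a = (y \<bullet> w) / (w \<bullet> w)"
  define Y where "Y = (\<Sum>i<n. y$i * w$i)"
  define W where "W = (\<Sum>i<n. w$i * w$i)"
  define Q where "Q = (\<Sum>i<n. y$i * y$i)"
  have YW: "y \<bullet> w = Y" "w \<bullet> w = W" using assms unfolding Y_def W_def
    by (auto simp: scalar_prod_def atLeast0LessThan)
  have W0: "W > 0" using assms YW by simp
  have ex: "(\<Sum>i<n. (y$i - x * w$i)^2) = Q - 2*x*Y + x^2*W" for x
  proof -
    have "(\<Sum>i<n. (y$i - x * w$i)^2) = (\<Sum>i<n. y$i * y$i - 2*x*(y$i * w$i) + x^2 * (w$i*w$i))"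
      by (intro sum.cong) (auto simp: power2_eq_square algebra_simps)
    also have "\<dots> = Q - 2*x*Y + x^2*W" unfolding Q_def Y_def W_def
      by (simp add: sum.distrib sum_subtractf sum_distrib_left)
    finally show ?thesis .
  qed
  have "(y - proj_onto w y) \<bullet> (y - proj_onto w y) = (\<Sum>i<n. (y$i - a * w$i)^2)"
    using assms unfolding proj_onto_def a_def
    by (simp add: scalar_prod_def atLeast0LessThan power2_eq_square)
  also have "\<dots> \<le> (\<Sum>i<n. (y$i - c * w$i)^2)"
  proof -
    have "Q - 2*c*Y + c^2*W - (Q - 2*a*Y + a^2*W) = (c*W - Y)^2 / W"
      unfolding a_def YW using W0 by (simp add: field_simps power2_eq_square)
    moreover have "(c*W - Y)^2 / W \<ge> 0" using W0 by simp
    ultimately show ?thesis unfolding ex by linarith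
  qed
  finally show ?thesis unfolding norm2_def by (rule real_sqrt_le_mono)
qed



lemma norm2_nonneg: "norm2 v \<ge> 0"
  unfolding norm2_def scalar_prod_def by (simp add: sum_nonneg)

lemma smallF:
  fixes C c t :: real
  assumes "C > 0" "0 \<le> c" "c \<le> 1/(4*(C+1))" "0 \<le> t" "t \<le> 2*c"
  shows "C * t^2 \<le> 1/4"
proof -
  define X where "X = (C+1)*c"
  have X0: "0 \<le> X" using assms X_def by simp
  have "X \<le> (C+1) * (1/(4*(C+1)))" unfolding X_def using assms by (intro mult_left_mono) auto
  also have "\<dots> = 1/4" using assms by simp
  finally have X1: "X \<le> 1/4" .
  have CC: "C \<le> (C+1)^2"
  proof -
    have "0 \<le> C*C + C + 1" using assms by simp
    then show ?thesis by (simp add: power2_eq_square algebra_simps)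
  qed
  have "C * c^2 \<le> (C+1)^2 * c^2"
    using CC by (intro mult_right_mono) auto
  also have "\<dots> = X^2" unfolding X_def by (simp add: power_mult_distrib)
  also have "\<dots> \<le> (1/4)^2" by (rule power_mono[OF X1 X0])
  finally have cc: "C * c^2 \<le> 1/16" by (simp add: power2_eq_square)
  have "t^2 \<le> (2*c)^2" using assms by (intro power_mono) auto
  hence "C * t^2 \<le> C * (4 * c^2)" using assms by (intro mult_left_mono) (auto simp: power_mult_distrib)
  also have "\<dots> = 4 * (C * c^2)" by simp
  also have "\<dots> \<le> 1/4" using cc by simp
  finally show ?thesis .
qed

lemma w_facts: "w_vec n phi \<in> carrier_vec n" "i < n \<Longrightarrow> w_vec n phi $ i = 1/phi^(n-1-i)"
  "n \<ge> 1 \<Longrightarrow> w_vec n phi \<bullet> w_vec n phi > 0"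
proof -
  show "w_vec n phi \<in> carrier_vec n" "i < n \<Longrightarrow> w_vec n phi $ i = 1/phi^(n-1-i)" by (auto simp: w_vec_def)
  assume n: "n \<ge> 1"
  have "w_vec n phi \<bullet> w_vec n phi = (\<Sum>i\<in>{0..<n}. (1/phi^(n-1-i))^2)"
    by (simp add: w_vec_def scalar_prod_def power2_eq_square)
  also have "\<dots> > 0"
    by (rule sum_pos2[of _ "n-1"]) (use n in auto)
  finally show "w_vec n phi \<bullet> w_vec n phi > 0" .
qed



theorem theorem3p3:
  fixes eps phi :: real and \<nu> :: "nat \<Rightarrow> real" and y :: "nat \<Rightarrow> real vec"
  assumes "\<bar>phi\<bar> > 1" and "eps \<noteq> phi"
    and "\<And>n. n \<ge> 2 \<Longrightarrow> eigenvector (tridiag_T n eps phi) (y n) (\<nu> n) \<and> norm2 (y n) = 1"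
    and "\<nu> \<longlonglongrightarrow> phi + 1 / phi"
  shows "(\<forall>\<^sub>F n in sequentially. outlier (tridiag_T n eps phi) (\<nu> n))
    \<and> (\<exists>c > 0. \<forall>\<^sub>F n in sequentially. \<forall>lam. eigenvalue (tridiag_T n eps phi) lam \<and> lam \<noteq> \<nu> n
          \<longrightarrow> \<bar>lam - (phi + 1 / phi)\<bar> \<ge> c)
    \<and> ((\<lambda>n. norm2 (y n - proj_onto (w_vec n phi) (y n))) \<longlonglongrightarrow> 0)"
proof -
  obtain C where C0: "C > 0" and Cb: "\<forall>n lam v. n \<ge> 2 \<longrightarrow> eps * v 0 + v 1 = lam * v 0
     \<longrightarrow> (\<forall>i. 1 \<le> i \<and> i+2 \<le> n \<longrightarrow> v (i-1) + v (i+1) = lam * v i)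
     \<longrightarrow> (\<Sum>i<n. (v i)^2) = 1
     \<longrightarrow> \<bar>lam - (phi + 1/phi)\<bar> \<le> \<bar>phi - eps\<bar>/2
     \<longrightarrow> (\<Sum>i<n. (v i - v (n-1) * (1/phi^(n-1-i)))^2) \<le> C * ((1/\<bar>phi\<bar>)^(n-2) + \<bar>lam - (phi+1/phi)\<bar>)^2"
    using core[OF assms(1,2)] by blast
  define \<mu> where "\<mu> = phi + 1/phi"
  define p where "p = \<bar>phi\<bar>"
  define \<kappa> where "\<kappa> = \<bar>phi - eps\<bar>/2"
  define \<rho> where "\<rho> n = (1/p)^(n-2)" for n :: nat
  have p1: "p > 1" using assms(1) p_def by simp
  have k0: "\<kappa> > 0" using assms(2) \<kappa>_def by simp
  have rho0: "\<rho> n \<ge> 0" for n using p1 \<rho>_def by simp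
  have bnd: "(\<Sum>i<n. (u$i / sqrt (u \<bullet> u) - u$(n-1) / sqrt (u \<bullet> u) * (1/phi^(n-1-i)))^2) \<le> C * (\<rho> n + \<bar>lam - \<mu>\<bar>)^2"
    if "n \<ge> 2" "eigenvector (tridiag_T n eps phi) u lam" "\<bar>lam - \<mu>\<bar> \<le> \<kappa>" for n u lam
  proof -
    note nm = normalized[OF that(1,2)]
    have l: "\<bar>lam - (phi + 1/phi)\<bar> \<le> \<bar>phi - eps\<bar>/2" using that(3) unfolding \<mu>_def \<kappa>_def .
    show ?thesis unfolding \<rho>_def \<mu>_def p_def
      using Cb[THEN spec[where x=n], THEN spec[where x=lam], THEN spec[where x="\<lambda>i. u$i / sqrt (u \<bullet> u)"]] that(1) nm(1) nm(2) nm(3) l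
      by blast
  qed
  have mu2: "\<bar>\<mu>\<bar> > 2"
  proof -
    have "\<bar>\<mu>\<bar> = p + 1/p"
    proof (cases "phi > 0")
      case True then show ?thesis unfolding \<mu>_def p_def by simp
    next
      case False
      then have "phi + 1/phi < 0" using assms(1) by (simp add: add_neg_neg)
      then show ?thesis using False unfolding \<mu>_def p_def by simp
    qed
    moreover have "p + 1/p - 2 = (p-1)^2/p" using p1 by (simp add: field_simps power2_eq_square)
    moreover have "(p-1)^2/p > 0" using p1 by simp
    ultimately show ?thesis by linarith
  qed
  have dlim: "(\<lambda>n. \<bar>\<nu> n - \<mu>\<bar>) \<longlonglongrightarrow> 0"
    using tendsto_rabs_zero[OF LIM_zero[OF assms(4)]] unfolding \<mu>_def .
  have rlim: "\<rho> \<longlonglongrightarrow> 0"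
  proof (rule LIMSEQ_offset[where k=2])
    show "(\<lambda>n. \<rho> (n+2)) \<longlonglongrightarrow> 0" unfolding \<rho>_def using p1
      by (simp add: LIMSEQ_realpow_zero)
  qed
  have ev2: "\<forall>\<^sub>F n in sequentially. n \<ge> 2" by (rule eventually_ge_at_top)
  have P1: "\<forall>\<^sub>F n in sequentially. outlier (tridiag_T n eps phi) (\<nu> n)"
  proof -
    have "\<forall>\<^sub>F n in sequentially. \<bar>\<nu> n - \<mu>\<bar> < \<bar>\<mu>\<bar> - 2"
      using order_tendstoD(2)[OF dlim] mu2 by simp
    then show ?thesis using ev2
    proof eventually_elim
      case (elim n)
      have "eigenvalue (tridiag_T n eps phi) (\<nu> n)"
        unfolding eigenvalue_def using assms(3)[OF elim(2)] by blast
      moreover have "\<bar>\<nu> n\<bar> > 2" using elim(1) by linarith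
      ultimately show ?case unfolding outlier_def by auto
    qed
  qed
  define c where "c = min \<kappa> (1/(4*(C+1)))"
  have c0: "c > 0" using k0 C0 c_def by simp
  have P2: "\<forall>\<^sub>F n in sequentially. \<forall>lam. eigenvalue (tridiag_T n eps phi) lam \<and> lam \<noteq> \<nu> n
          \<longrightarrow> \<bar>lam - (phi + 1 / phi)\<bar> \<ge> c"
  proof -
    have e1: "\<forall>\<^sub>F n in sequentially. \<bar>\<nu> n - \<mu>\<bar> < c" using order_tendstoD(2)[OF dlim c0] .
    have e2: "\<forall>\<^sub>F n in sequentially. \<rho> n < c" using order_tendstoD(2)[OF rlim c0] .
    show ?thesis using e1 e2 ev2
    proof eventually_elim
      case (elim n)
      show ?case
      proof (intro allI impI)
        fix lam assume h: "eigenvalue (tridiag_T n eps phi) lam \<and> lam \<noteq> \<nu> n"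
        show "\<bar>lam - (phi + 1 / phi)\<bar> \<ge> c"
        proof (rule ccontr)
          assume "\<not> \<bar>lam - (phi + 1 / phi)\<bar> \<ge> c"
          hence lc: "\<bar>lam - \<mu>\<bar> < c" unfolding \<mu>_def by simp
          obtain u where u: "eigenvector (tridiag_T n eps phi) u lam" using h unfolding eigenvalue_def by blast
          have yv: "eigenvector (tridiag_T n eps phi) (y n) (\<nu> n)" using assms(3)[OF elim(3)] by blast
          have ck: "c \<le> \<kappa>" "c \<le> 1/(4*(C+1))" unfolding c_def by auto
          define F where "F = (1/4::real)"
          have b1: "(\<Sum>i<n. (u$i / sqrt (u \<bullet> u) - u$(n-1) / sqrt (u \<bullet> u) * (1/phi^(n-1-i)))^2) \<le> F"
          proof -
            have "C * (\<rho> n + \<bar>lam - \<mu>\<bar>)^2 \<le> 1/4"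
              using C0 c0 ck(2) rho0[of n] elim(2) lc by (intro smallF) auto
            then show ?thesis using bnd[OF elim(3) u] lc ck(1) unfolding F_def by linarith
          qed
          have b2: "(\<Sum>i<n. ((y n)$i / sqrt (y n \<bullet> y n) - (y n)$(n-1) / sqrt (y n \<bullet> y n) * (1/phi^(n-1-i)))^2) \<le> F"
          proof -
            have "C * (\<rho> n + \<bar>\<nu> n - \<mu>\<bar>)^2 \<le> 1/4"
              using C0 c0 ck(2) rho0[of n] elim(1,2) by (intro smallF) auto
            then show ?thesis using bnd[OF elim(3) yv] elim(1) ck(1) unfolding F_def by linarith
          qed
          have o: "(\<Sum>i<n. u$i * (y n)$i) = 0" using orth[OF elim(3) u yv] h by blast
          have o2: "(\<Sum>i<n. (u$i / sqrt (u \<bullet> u)) * ((y n)$i / sqrt (y n \<bullet> y n))) = 0"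
          proof -
            have "(\<Sum>i<n. (u$i / sqrt (u \<bullet> u)) * ((y n)$i / sqrt (y n \<bullet> y n)))
                 = (\<Sum>i<n. u$i * (y n)$i) / (sqrt (u \<bullet> u) * sqrt (y n \<bullet> y n))"
              by (simp add: sum_divide_distrib)
            then show ?thesis using o by simp
          qed
          show False
            by (rule orth_contra[OF normalized(3)[OF elim(3) u] normalized(3)[OF elim(3) yv] o2 b1 b2])
               (simp add: F_def)
        qed
      qed
    qed
  qed
  have P3: "(\<lambda>n. norm2 (y n - proj_onto (w_vec n phi) (y n))) \<longlonglongrightarrow> 0"
  proof (rule tendsto_sandwich[where f="\<lambda>n. 0" and h="\<lambda>n. sqrt C * (\<rho> n + \<bar>\<nu> n - \<mu>\<bar>)"])
    show "\<forall>\<^sub>F n in sequentially. 0 \<le> norm2 (y n - proj_onto (w_vec n phi) (y n))"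
      by (simp add: norm2_nonneg)
    show "(\<lambda>n. 0) \<longlonglongrightarrow> (0::real)" by simp
    show "(\<lambda>n. sqrt C * (\<rho> n + \<bar>\<nu> n - \<mu>\<bar>)) \<longlonglongrightarrow> 0"
      using tendsto_mult[OF tendsto_const[of "sqrt C"] tendsto_add_zero[OF rlim dlim]] by simp
    have e1: "\<forall>\<^sub>F n in sequentially. \<bar>\<nu> n - \<mu>\<bar> < \<kappa>" using order_tendstoD(2)[OF dlim k0] .
    show "\<forall>\<^sub>F n in sequentially. norm2 (y n - proj_onto (w_vec n phi) (y n)) \<le> sqrt C * (\<rho> n + \<bar>\<nu> n - \<mu>\<bar>)"
      using e1 ev2
    proof eventually_elim
      case (elim n)
      have yv: "eigenvector (tridiag_T n eps phi) (y n) (\<nu> n)" and yn: "norm2 (y n) = 1"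
        using assms(3)[OF elim(2)] by blast+
      have s1: "sqrt (y n \<bullet> y n) = 1" using yn unfolding norm2_def .
      have yc: "y n \<in> carrier_vec n" using eig_rows(1)[OF elim(2) yv] .
      have "norm2 (y n - proj_onto (w_vec n phi) (y n)) \<le> sqrt (\<Sum>i<n. ((y n)$i - (y n)$(n-1) * w_vec n phi $ i)^2)"
        using w_facts(3)[of n phi] elim(2) by (intro proj_bound[OF yc w_facts(1)]) auto
      also have "(\<Sum>i<n. ((y n)$i - (y n)$(n-1) * w_vec n phi $ i)^2)
          = (\<Sum>i<n. ((y n)$i / sqrt (y n \<bullet> y n) - (y n)$(n-1) / sqrt (y n \<bullet> y n) * (1/phi^(n-1-i)))^2)"
        unfolding s1 by (intro sum.cong) (auto simp: w_facts(2))
      also have "\<dots> \<le> C * (\<rho> n + \<bar>\<nu> n - \<mu>\<bar>)^2" using bnd[OF elim(2) yv] elim(1) by simp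
      finally have "norm2 (y n - proj_onto (w_vec n phi) (y n)) \<le> sqrt (C * (\<rho> n + \<bar>\<nu> n - \<mu>\<bar>)^2)"
        by (simp add: real_sqrt_le_mono)
      also have "\<dots> = sqrt C * (\<rho> n + \<bar>\<nu> n - \<mu>\<bar>)"
        using rho0[of n] by (simp add: real_sqrt_mult)
      finally show ?case .
    qed
  qed
  show ?thesis using P1 P2 P3 c0 by blast
qed


end
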